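(* In a combinatorial auction where all bidders play piecewise constant strategies, suppose there is a constant $c\in\mathbb{R}_{\ge0}$ such that every bid $b_j(K)$ of every bidder $j$ on every bundle $K$ (that occurs with positive probability) is an integer multiple of $c$. Then for every bidder $i$, all coordinates of all cell vertices of bidder $i$'s action space are integer multiples of $c$.
   Context: A combinatorial auction sells goods $M$ to bidders $N$; each bidder $i$ bids a vector $b_i\in\mathbb{R}_{\ge0}^r$ on his $r$ bundles of interest (other bundles bid $0$). An allocation gives each bidder one bundle of interest or $\emptyset$, pairwise disjoint; $X(b)$ is the set of allocations maximizing $\sum_i b_i(x_i)$. Bidders' valuations are independent random variables $V_j$ and a strategy $s_j$ maps valuations to bids; it is piecewise constant if it takes finitely many values, so the distribution of $b_{-i}=s_{-i}(V_{-i})$ has finite support. A cell of bidder $i$'s action space $\mathbb{R}_{\ge0}^r$ is a connected region $S$ such that for every $b_{-i}$ with positive probability there exists an allocation $x$ with $x\in X(b_i,b_{-i})$ for all $b_i\in S$; cells are convex polytopes and cell vertices are their vertices. *)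

theory Defs
  imports "HOL-Analysis.Analysis" "HOL-Probability.Probability_Mass_Function"
begin

text \<open>Bidders N, goods M; bidder j's r bundles of interest are K j k for k :: 'r.  An allocation assigns to each bidder either
  one of his bundles of interest (Some k) or the empty bundle (None).\<close>

definition is_allocation :: "'n set \<Rightarrow> ('n \<Rightarrow> 'r \<Rightarrow> 'g set) \<Rightarrow> ('n \<Rightarrow> 'r option) \<Rightarrow> bool" where
  "is_allocation N K x \<longleftrightarrow>
     (\<forall>j. j \<notin> N \<longrightarrow> x j = None) \<and>
     (\<forall>j\<in>N. \<forall>l\<in>N. \<forall>k k'. j \<noteq> l \<longrightarrow> x j = Some k \<longrightarrow> x l = Some k' \<longrightarrow> K j k \<inter> K l k' = {})"

definition alloc_value :: "'n set \<Rightarrow> ('n \<Rightarrow> real^'r) \<Rightarrow> ('n \<Rightarrow> 'r option) \<Rightarrow> real" where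
  "alloc_value N b x = (\<Sum>j\<in>N. case x j of None \<Rightarrow> 0 | Some k \<Rightarrow> b j $ k)"

definition opt_allocs :: "'n set \<Rightarrow> ('n \<Rightarrow> 'r \<Rightarrow> 'g set) \<Rightarrow> ('n \<Rightarrow> real^'r) \<Rightarrow> ('n \<Rightarrow> 'r option) set" where
  "opt_allocs N K b = {x. is_allocation N K x \<and>
     (\<forall>y. is_allocation N K y \<longrightarrow> alloc_value N b y \<le> alloc_value N b x)}"

definition nonneg_orthant :: "(real^'r) set" where
  "nonneg_orthant = {v. \<forall>k. 0 \<le> v $ k}"

text \<open>D j is the distribution of bidder j's bid s_j(V_j) (finite support for piecewise
  constant strategies).  By independence, b_{-i} has positive probability iff
  b j \<in> set_pmf (D j) for all j \<in> N - {i}.\<close>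
definition good_region :: "'n set \<Rightarrow> ('n \<Rightarrow> 'r \<Rightarrow> 'g set) \<Rightarrow> ('n \<Rightarrow> (real^'r) pmf) \<Rightarrow> 'n \<Rightarrow> (real^'r) set \<Rightarrow> bool" where
  "good_region N K D i S \<longleftrightarrow> S \<subseteq> nonneg_orthant \<and> connected S \<and>
     (\<forall>bo. (\<forall>j\<in>N - {i}. bo j \<in> set_pmf (D j)) \<longrightarrow>
        (\<exists>x. \<forall>v\<in>S. x \<in> opt_allocs N K (bo(i := v))))"

definition is_cell :: "'n set \<Rightarrow> ('n \<Rightarrow> 'r \<Rightarrow> 'g set) \<Rightarrow> ('n \<Rightarrow> (real^'r) pmf) \<Rightarrow> 'n \<Rightarrow> (real^'r) set \<Rightarrow> bool" where
  "is_cell N K D i S \<longleftrightarrow> S \<noteq> {} \<and> good_region N K D i S \<and>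
     (\<forall>T. good_region N K D i T \<and> S \<subseteq> T \<longrightarrow> T = S)"

definition cell_vertex :: "'n set \<Rightarrow> ('n \<Rightarrow> 'r \<Rightarrow> 'g set) \<Rightarrow> ('n \<Rightarrow> (real^'r) pmf) \<Rightarrow> 'n \<Rightarrow> real^'r \<Rightarrow> bool" where
  "cell_vertex N K D i p \<longleftrightarrow> (\<exists>S. is_cell N K D i S \<and> p extreme_point_of S)"

end

theory Submission imports Defs begin

definition dz :: "real \<Rightarrow> real" where
  "dz u = min (u - of_int \<lfloor>u\<rfloor>) (of_int \<lfloor>u\<rfloor> + 1 - u)"

lemma dz_le: "dz u \<le> \<bar>u - of_int n\<bar>"
proof (cases "n \<le> \<lfloor>u\<rfloor>")
  case True
  then have "real_of_int n \<le> of_int \<lfloor>u\<rfloor>" by simp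
  then show ?thesis unfolding dz_def using of_int_floor_le[of u] by linarith
next
  case False
  then have "real_of_int n \<ge> of_int \<lfloor>u\<rfloor> + 1" by linarith
  then show ?thesis unfolding dz_def using real_of_int_floor_add_one_gt[of u] by linarith
qed

lemma dz_att: "\<exists>n. dz u = \<bar>u - of_int n\<bar>"
proof -
  have "dz u = \<bar>u - of_int \<lfloor>u\<rfloor>\<bar> \<or> dz u = \<bar>u - of_int (\<lfloor>u\<rfloor> + 1)\<bar>"
  proof (cases "u - of_int \<lfloor>u\<rfloor> \<le> of_int \<lfloor>u\<rfloor> + 1 - u")
    case True
    then have "dz u = u - of_int \<lfloor>u\<rfloor>" unfolding dz_def by simp
    then show ?thesis using of_int_floor_le[of u] by simp
  next
    case False
    then have "dz u = of_int \<lfloor>u\<rfloor> + 1 - u" unfolding dz_def by simp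
    then have "dz u = \<bar>u - of_int (\<lfloor>u\<rfloor> + 1)\<bar>" using real_of_int_floor_add_one_gt[of u] by simp
    then show ?thesis by blast
  qed
  then show ?thesis by blast
qed

lemma dz_lip: "\<bar>dz u - dz w\<bar> \<le> \<bar>u - w\<bar>"
proof -
  obtain n where n: "dz w = \<bar>w - of_int n\<bar>" using dz_att by blast
  obtain m where m: "dz u = \<bar>u - of_int m\<bar>" using dz_att by blast
  have "dz u \<le> \<bar>u - of_int n\<bar>" by (rule dz_le)
  moreover have "dz w \<le> \<bar>w - of_int m\<bar>" by (rule dz_le)
  moreover have "\<bar>u - of_int n\<bar> \<le> \<bar>u - w\<bar> + \<bar>w - of_int n\<bar>" using abs_triangle_ineq[of "u - w" "w - of_int n"] by simp
  moreover have "\<bar>w - of_int m\<bar> \<le> \<bar>u - w\<bar> + \<bar>u - of_int m\<bar>"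
    using abs_triangle_ineq[of "w - u" "u - of_int m"] by (simp add: abs_minus_commute)
  ultimately have "dz u - dz w \<le> \<bar>u - w\<bar>" "dz w - dz u \<le> \<bar>u - w\<bar>" using n m by linarith+
  then show ?thesis by (simp add: abs_le_iff)
qed

lemma dz_shift: "dz (u + of_int a) = dz u"
proof -
  have "\<lfloor>u + of_int a\<rfloor> = \<lfloor>u\<rfloor> + a" by (metis floor_add_int)
  then show ?thesis unfolding dz_def by simp
qed

lemma dz_zero: "dz 0 = 0" unfolding dz_def by simp

lemma dz_pos: "\<not> (\<exists>z. u = of_int z) \<Longrightarrow> dz u > 0"
proof -
  assume "\<not> (\<exists>z. u = of_int z)"
  then have "u \<noteq> of_int \<lfloor>u\<rfloor>" by blast
  then have "u - of_int \<lfloor>u\<rfloor> > 0" using of_int_floor_le[of u] by linarith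
  moreover have "of_int \<lfloor>u\<rfloor> + 1 - u > 0" using real_of_int_floor_add_one_gt[of u] by linarith
  ultimately show ?thesis unfolding dz_def by simp
qed

definition phi :: "real \<Rightarrow> real \<Rightarrow> real \<Rightarrow> real" where
  "phi c s x = (if c = 0 then (1 + s/2) * x else x + s * c * dz (x / c) / 2)"

lemma phi_mono:
  assumes "c \<ge> 0" "\<bar>s\<bar> \<le> 1" "x < y" shows "phi c s x < phi c s y"
proof (cases "c = 0")
  case True
  then show ?thesis using assms by (simp add: phi_def mult_strict_left_mono)
next
  case False
  then have c: "c > 0" using assms by simp
  have l: "\<bar>dz (y/c) - dz (x/c)\<bar> \<le> \<bar>y/c - x/c\<bar>" by (rule dz_lip)
  have "\<bar>y/c - x/c\<bar> = (y - x)/c" using c assms by (simp add: diff_divide_distrib[symmetric])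
  then have "c * \<bar>dz (y/c) - dz (x/c)\<bar> \<le> y - x" using l c
    by (metis mult_left_mono less_eq_real_def nonzero_mult_div_cancel_left times_divide_eq_right False)
  moreover have "\<bar>s * c * (dz (y/c) - dz (x/c))\<bar> \<le> c * \<bar>dz (y/c) - dz (x/c)\<bar>"
    using assms c by (simp add: abs_mult mult_left_le_one_le)
  ultimately have "\<bar>s * c * dz (y/c) - s * c * dz (x/c)\<bar> \<le> y - x" by (simp add: algebra_simps)
  then show ?thesis using False assms by (simp add: phi_def)
qed

lemma phi_mono_le:
  assumes "c \<ge> 0" "\<bar>s\<bar> \<le> 1" shows "x \<le> y \<longleftrightarrow> phi c s x \<le> phi c s y"
  using phi_mono[OF assms, of x y] phi_mono[OF assms, of y x] by (cases x y rule: linorder_cases) auto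

lemma phi_shift: "phi c s (x + of_int a * c) = phi c s x + of_int a * c"
proof (cases "c = 0")
  case False
  have "(x + of_int a * c) / c = x / c + of_int a" using False by (simp add: field_simps)
  then show ?thesis using False by (simp add: phi_def dz_shift)
qed (simp add: phi_def)

lemma phi_int: "phi c s (of_int a * c) = of_int a * c"
  using phi_shift[of c s 0 a] by (simp add: phi_def dz_zero)

lemma phi_sum: "phi c 1 x + phi c (-1) x = 2 * x"
  by (simp add: phi_def algebra_simps)

lemma phi_dist: assumes "c \<ge> 0" "\<not> (\<exists>z::int. x = of_int z * c)"
  shows "phi c 1 x \<noteq> phi c (-1) x"
proof (cases "c = 0")
  case True then show ?thesis using assms by (auto simp: phi_def)
next
  case False
  have "\<not> (\<exists>z. x / c = of_int z)" using assms False by (auto simp: field_simps)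
  then have "dz (x/c) > 0" by (rule dz_pos)
  then show ?thesis using False assms by (simp add: phi_def)
qed

lemma val_split:
  assumes "finite N" "i \<in> N"
  shows "alloc_value N (bo(i:=v)) x = alloc_value (N - {i}) bo x + (case x i of None \<Rightarrow> 0 | Some k \<Rightarrow> v $ k)"
proof -
  have "alloc_value N (bo(i:=v)) x = (case x i of None \<Rightarrow> 0 | Some k \<Rightarrow> v $ k) +
     (\<Sum>j\<in>N - {i}. case x j of None \<Rightarrow> 0 | Some k \<Rightarrow> (bo(i:=v)) j $ k)"
    unfolding alloc_value_def using sum.remove[OF assms, of "\<lambda>j. case x j of None \<Rightarrow> 0 | Some k \<Rightarrow> (bo(i:=v)) j $ k"]
    by (simp split: option.split)
  also have "(\<Sum>j\<in>N - {i}. case x j of None \<Rightarrow> 0 | Some k \<Rightarrow> (bo(i:=v)) j $ k) = alloc_value (N - {i}) bo x"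
    unfolding alloc_value_def by (rule sum.cong) (auto split: option.split)
  finally show ?thesis by (simp add: fun_upd_def add.commute)
qed

lemma sum_mult_c:
  "finite A \<Longrightarrow> \<forall>j\<in>A. \<exists>z::int. f j = of_int z * c \<Longrightarrow> \<exists>z::int. sum f A = of_int z * (c::real)"
proof (induction A rule: finite_induct)
  case empty then show ?case by (intro exI[of _ 0]) simp
next
  case (insert a A)
  then obtain z1 where "f a = of_int z1 * c" by auto
  moreover from insert obtain z2 where "sum f A = of_int z2 * c" by auto
  ultimately show ?case using insert by (intro exI[of _ "z1 + z2"]) (simp add: algebra_simps)
qed

lemma A_mult:
  assumes "\<forall>j\<in>N. \<forall>v\<in>set_pmf (D j). \<forall>k. \<exists>z::int. v $ k = of_int z * c" "finite N"
    "\<forall>j\<in>N - {i}. bo j \<in> set_pmf (D j)"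
  shows "\<exists>z::int. alloc_value (N - {i}) bo x = of_int z * c"
  unfolding alloc_value_def
proof (rule sum_mult_c)
  show "finite (N - {i})" using assms by simp
  show "\<forall>j\<in>N - {i}. \<exists>z::int. (case x j of None \<Rightarrow> 0 | Some k \<Rightarrow> bo j $ k) = of_int z * c"
  proof
    fix j assume j: "j \<in> N - {i}"
    show "\<exists>z::int. (case x j of None \<Rightarrow> 0 | Some k \<Rightarrow> bo j $ k) = of_int z * c"
    proof (cases "x j")
      case None then show ?thesis by (intro exI[of _ 0]) simp
    next
      case (Some k) then show ?thesis using assms j by auto
    qed
  qed
qed

lemma pres:
  fixes c s :: real
  assumes fin: "finite N" and iN: "i \<in> N" and c: "c \<ge> 0" and s: "\<bar>s\<bar> \<le> 1"
    and mult: "\<forall>j\<in>N. \<forall>v\<in>set_pmf (D j). \<forall>k. \<exists>z::int. v $ k = of_int z * c"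
    and bo: "\<forall>j\<in>N - {i}. bo j \<in> set_pmf (D j)"
    and x: "x \<in> opt_allocs N K (bo(i:=v))"
  shows "x \<in> opt_allocs N K (bo(i := (\<chi> k. phi c s (v$k))))"
proof -
  define w where "w = (\<chi> k. phi c s (v$k))"
  have w: "\<And>k. w $ k = phi c s (v $ k)" unfolding w_def by simp
  have mono: "\<And>a b. a \<le> b \<Longrightarrow> phi c s a \<le> phi c s b" using phi_mono_le[OF c s] by blast
  have ax: "is_allocation N K x" using x unfolding opt_allocs_def by simp
  have "alloc_value N (bo(i:=w)) y \<le> alloc_value N (bo(i:=w)) x" if y: "is_allocation N K y" for y
  proof -
    have le: "alloc_value N (bo(i:=v)) y \<le> alloc_value N (bo(i:=v)) x" using x y unfolding opt_allocs_def by simp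
    obtain zx where zx: "alloc_value (N - {i}) bo x = of_int zx * c" using A_mult[OF mult fin bo] by blast
    obtain zy where zy: "alloc_value (N - {i}) bo y = of_int zy * c" using A_mult[OF mult fin bo] by blast
    note vs = val_split[OF fin iN]
    show ?thesis
    proof (cases "x i")
      case None note xN = None
      show ?thesis
      proof (cases "y i")
        case None then show ?thesis using le xN by (simp add: vs)
      next
        case (Some k)
        then have "v $ k \<le> of_int (zx - zy) * c" using le xN zx zy by (simp add: vs algebra_simps)
        then have "phi c s (v $ k) \<le> of_int (zx - zy) * c" using mono phi_int by metis
        then show ?thesis using Some xN zx zy by (simp add: vs w algebra_simps)
      qed
    next
      case (Some k') note xS = Some
      show ?thesis
      proof (cases "y i")
        case None
        then have "of_int (zy - zx) * c \<le> v $ k'" using le xS zx zy by (simp add: vs algebra_simps)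
        then have "of_int (zy - zx) * c \<le> phi c s (v $ k')" using mono phi_int by metis
        then show ?thesis using None xS zx zy by (simp add: vs w algebra_simps)
      next
        case (Some k)
        then have "v $ k \<le> v $ k' + of_int (zx - zy) * c" using le xS zx zy by (simp add: vs algebra_simps)
        then have "phi c s (v $ k) \<le> phi c s (v $ k') + of_int (zx - zy) * c" using mono phi_shift by metis
        then show ?thesis using Some xS zx zy by (simp add: vs w algebra_simps)
      qed
    qed
  qed
  then show ?thesis using ax unfolding opt_allocs_def w_def by simp
qed

lemma comb:
  fixes A B p1 p2 q1 q2 u v :: real
  assumes "A + p1 \<le> B + q1" "A + p2 \<le> B + q2" "u \<ge> 0" "v \<ge> 0" "u + v = 1"
  shows "A + (u * p1 + v * p2) \<le> B + (u * q1 + v * q2)"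
proof -
  have "u * (A + p1) \<le> u * (B + q1)" using assms by (intro mult_left_mono) auto
  moreover have "v * (A + p2) \<le> v * (B + q2)" using assms by (intro mult_left_mono) auto
  ultimately have "u * (A + p1) + v * (A + p2) \<le> u * (B + q1) + v * (B + q2)" by simp
  moreover have "A = u * A + v * A" "B = u * B + v * B" using assms(5) by (metis mult.right_neutral distrib_left mult.commute)+
  ultimately show ?thesis by (simp add: algebra_simps)
qed

lemma opt_convex:
  assumes fin: "finite N" and iN: "i \<in> N"
  shows "convex {v. x \<in> opt_allocs N K (bo(i:=v))}"
  unfolding convex_def
proof (intro ballI allI impI)
  fix a b and u v :: real
  assume a: "a \<in> {v. x \<in> opt_allocs N K (bo(i:=v))}" and b: "b \<in> {v. x \<in> opt_allocs N K (bo(i:=v))}"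
    and uv: "0 \<le> u" "0 \<le> v" "u + v = 1"
  have lin: "\<And>z. (case z i of None \<Rightarrow> 0 | Some k \<Rightarrow> (u *\<^sub>R a + v *\<^sub>R b) $ k) =
     u * (case z i of None \<Rightarrow> 0 | Some k \<Rightarrow> a $ k) + v * (case z i of None \<Rightarrow> 0 | Some k \<Rightarrow> b $ k)"
    by (simp split: option.split)
  note vs = val_split[OF fin iN]
  have "alloc_value N (bo(i:=u *\<^sub>R a + v *\<^sub>R b)) y \<le> alloc_value N (bo(i:=u *\<^sub>R a + v *\<^sub>R b)) x"
    if y: "is_allocation N K y" for y
    unfolding vs lin
    apply (rule comb[OF _ _ uv])
    using a b y unfolding opt_allocs_def vs by auto
  then show "u *\<^sub>R a + v *\<^sub>R b \<in> {v. x \<in> opt_allocs N K (bo(i:=v))}"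
    using a unfolding opt_allocs_def by auto
qed

lemma orthant_convex: "convex nonneg_orthant"
  unfolding convex_def nonneg_orthant_def by simp

theorem lemma1:
  fixes M :: "'g set" and N :: "'n set" and K :: "'n \<Rightarrow> 'r::finite \<Rightarrow> 'g set"
    and D :: "'n \<Rightarrow> (real^'r) pmf" and c :: real and i :: 'n and p :: "real^'r"
  assumes "finite M" and "finite N"
    and "\<forall>j\<in>N. \<forall>k. K j k \<subseteq> M"
    and "\<forall>j\<in>N. finite (set_pmf (D j))"
    and "\<forall>j\<in>N. set_pmf (D j) \<subseteq> nonneg_orthant"
    and "c \<ge> 0"
    and "\<forall>j\<in>N. \<forall>v\<in>set_pmf (D j). \<forall>k. \<exists>z::int. v $ k = of_int z * c"
    and "i \<in> N"
    and "cell_vertex N K D i p"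
  shows "\<forall>k. \<exists>z::int. p $ k = of_int z * c"
proof -
  note fin = assms(2) and c = assms(6) and mult = assms(7) and iN = assms(8)
  obtain S where cell: "is_cell N K D i S" and ext: "p extreme_point_of S"
    using assms(9) unfolding cell_vertex_def by blast
  define G where "G = {bo. \<forall>j\<in>N - {i}. bo j \<in> set_pmf (D j)}"
  have good: "good_region N K D i S" using cell unfolding is_cell_def by simp
  then have "\<forall>bo\<in>G. \<exists>x. \<forall>v\<in>S. x \<in> opt_allocs N K (bo(i := v))"
    unfolding good_region_def G_def by blast
  then obtain X where X: "\<And>bo v. bo \<in> G \<Longrightarrow> v \<in> S \<Longrightarrow> X bo \<in> opt_allocs N K (bo(i := v))"
    by metis
  define S' where "S' = nonneg_orthant \<inter> (\<Inter>bo\<in>G. {v. X bo \<in> opt_allocs N K (bo(i:=v))})"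
  have sub: "S \<subseteq> S'" using good X unfolding S'_def good_region_def by blast
  have cvx: "convex S'" unfolding S'_def
    by (intro convex_Int orthant_convex convex_INT ballI opt_convex[OF fin iN])
  have "good_region N K D i S'"
    unfolding good_region_def
  proof (intro conjI allI impI)
    show "S' \<subseteq> nonneg_orthant" unfolding S'_def by blast
    show "connected S'" using cvx by (rule convex_connected)
    fix bo assume "\<forall>j\<in>N - {i}. bo j \<in> set_pmf (D j)"
    then have "bo \<in> G" unfolding G_def by simp
    then show "\<exists>x. \<forall>v\<in>S'. x \<in> opt_allocs N K (bo(i := v))" unfolding S'_def by blast
  qed
  then have SS: "S' = S" using cell sub unfolding is_cell_def by blast
  have clos: "(\<chi> k. phi c s (v$k)) \<in> S" if v: "v \<in> S" and s: "\<bar>s\<bar> \<le> 1" for v s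
  proof -
    have v': "v \<in> S'" using v SS by simp
    have "(\<chi> k. phi c s (v$k)) \<in> nonneg_orthant"
    proof -
      have "\<And>k. 0 \<le> v $ k" using v' unfolding S'_def nonneg_orthant_def by blast
      then have "\<And>k. phi c s 0 \<le> phi c s (v $ k)" using phi_mono_le[OF c s] by blast
      moreover have "phi c s 0 = 0" using phi_int[of c s 0] by simp
      ultimately show ?thesis unfolding nonneg_orthant_def by simp
    qed
    moreover have "X bo \<in> opt_allocs N K (bo(i:=(\<chi> k. phi c s (v$k))))" if bo: "bo \<in> G" for bo
      apply (rule pres[OF fin iN c s mult])
      using bo v' unfolding G_def S'_def by auto
    ultimately show ?thesis using SS unfolding S'_def by blast
  qed
  show ?thesis
  proof (rule ccontr)
    assume "\<not> ?thesis"
    then obtain k where k: "\<not> (\<exists>z::int. p $ k = of_int z * c)" by blast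
    have pS: "p \<in> S" using ext unfolding extreme_point_of_def by blast
    define a where "a = (\<chi> k. phi c 1 (p$k))"
    define b where "b = (\<chi> k. phi c (-1) (p$k))"
    have aS: "a \<in> S" unfolding a_def by (rule clos[OF pS]) simp
    have bS: "b \<in> S" unfolding b_def by (rule clos[OF pS]) simp
    have "a \<noteq> b"
    proof
      assume "a = b"
      then have "a $ k = b $ k" by simp
      then show False using phi_dist[OF c k] unfolding a_def b_def by simp
    qed
    then have "midpoint a b \<in> open_segment a b" by simp
    moreover have "midpoint a b = p"
    proof -
      have "\<And>j. phi c 1 (p $ j) + phi c (- 1) (p $ j) = p $ j * 2"
        using phi_sum[of c] by (simp add: mult.commute)
      then show ?thesis by (simp add: vec_eq_iff midpoint_def a_def b_def)
    qed
    ultimately show False using ext aS bS unfolding extreme_point_of_def by blast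
  qed
qed

end
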